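(* Let $a,\omega_1,\omega_2,\mu\in\mathbb{R}$ with $a\neq0$, and on $T^*\mathbb{R}^2$ with coordinates $(p_x,p_y,x,y)$ let \[H_{\mathrm{KdV}_5}=\tfrac12(p_x^2+p_y^2)+\tfrac12(\omega_1x^2+\omega_2y^2)+axy^2+2ax^3+\tfrac{\mu}{2y^2},\] \[K_{\mathrm{KdV}_5}=4ay\,p_xp_y+(4\omega_2-\omega_1-4ax)\Bigl(p_y^2+\tfrac{\mu}{y^2}\Bigr)+a^2y^4+4a^2x^2y^2+4a\omega_2xy^2+\omega_2(4\omega_2-\omega_1)y^2.\] Consider new variables $(P_1,P_2,X,Y)$, on an open set where $XY<0$ and $X\neq Y$, related to the old ones by \[x=\tfrac{2X+2Y-\omega_1+4\omega_2}{4a},\quad y=\tfrac{\sqrt{-XY}}{a},\quad p_x=2a\,\tfrac{XP_1-YP_2}{X-Y},\quad p_y=2a\sqrt{-XY}\,\tfrac{P_1-P_2}{X-Y}.\] Then $p_x\,dx+p_y\,dy=P_1\,dX+P_2\,dY$ (so the change of variables is canonical), and, with \[\Phi(\xi,\pi)=\frac{4\xi^5+(-4\omega_1+24\omega_2)\xi^4+(\omega_1-4\omega_2)(\omega_1-12\omega_2)\xi^3+\bigl(32a^4\pi^2+2\omega_1^2\omega_2-16\omega_1\omega_2^2+32\omega_2^3\bigr)\xi^2+8\mu a^4}{16\xi a^2},\] one has \[H_{\mathrm{KdV}_5}=\frac{\Phi(X,P_1)-\Phi(Y,P_2)}{X-Y},\qquad K_{\mathrm{KdV}_5}=\frac{4X\,\Phi(Y,P_2)-4Y\,\Phi(X,P_1)}{X-Y}.\]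 Consequently, on the common level set $H_{\mathrm{KdV}_5}=E$, $K_{\mathrm{KdV}_5}=K$ the separated relations $\Phi(X,P_1)-EX-\frac K4=0$ and $\Phi(Y,P_2)-EY-\frac K4=0$ hold. *)

theory Defs
  imports "HOL-Analysis.Analysis"
begin

definition H_KdV5 :: "real \<Rightarrow> real \<Rightarrow> real \<Rightarrow> real \<Rightarrow> real \<Rightarrow> real \<Rightarrow> real \<Rightarrow> real \<Rightarrow> real" where
  "H_KdV5 a \<omega>\<^sub>1 \<omega>\<^sub>2 \<mu> px py x y =
     (px^2 + py^2) / 2 + (\<omega>\<^sub>1 * x^2 + \<omega>\<^sub>2 * y^2) / 2 + a * x * y^2 + 2 * a * x^3 + \<mu> / (2 * y^2)"

definition K_KdV5 :: "real \<Rightarrow> real \<Rightarrow> real \<Rightarrow> real \<Rightarrow> real \<Rightarrow> real \<Rightarrow> real \<Rightarrow> real \<Rightarrow> real" where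
  "K_KdV5 a \<omega>\<^sub>1 \<omega>\<^sub>2 \<mu> px py x y =
     4 * a * y * px * py + (4 * \<omega>\<^sub>2 - \<omega>\<^sub>1 - 4 * a * x) * (py^2 + \<mu> / y^2)
     + a^2 * y^4 + 4 * a^2 * x^2 * y^2 + 4 * a * \<omega>\<^sub>2 * x * y^2 + \<omega>\<^sub>2 * (4 * \<omega>\<^sub>2 - \<omega>\<^sub>1) * y^2"

definition Phi :: "real \<Rightarrow> real \<Rightarrow> real \<Rightarrow> real \<Rightarrow> real \<Rightarrow> real \<Rightarrow> real" where
  "Phi a \<omega>\<^sub>1 \<omega>\<^sub>2 \<mu> \<xi> \<pi> =
     (4 * \<xi>^5 + (-4 * \<omega>\<^sub>1 + 24 * \<omega>\<^sub>2) * \<xi>^4 + (\<omega>\<^sub>1 - 4 * \<omega>\<^sub>2) * (\<omega>\<^sub>1 - 12 * \<omega>\<^sub>2) * \<xi>^3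
      + (32 * a^4 * \<pi>^2 + 2 * \<omega>\<^sub>1^2 * \<omega>\<^sub>2 - 16 * \<omega>\<^sub>1 * \<omega>\<^sub>2^2 + 32 * \<omega>\<^sub>2^3) * \<xi>^2
      + 8 * \<mu> * a^4) / (16 * \<xi> * a^2)"

definition x_of :: "real \<Rightarrow> real \<Rightarrow> real \<Rightarrow> real \<Rightarrow> real \<Rightarrow> real" where
  "x_of a \<omega>\<^sub>1 \<omega>\<^sub>2 X Y = (2 * X + 2 * Y - \<omega>\<^sub>1 + 4 * \<omega>\<^sub>2) / (4 * a)"

definition y_of :: "real \<Rightarrow> real \<Rightarrow> real \<Rightarrow> real" where
  "y_of a X Y = sqrt (- X * Y) / a"

definition px_of :: "real \<Rightarrow> real \<Rightarrow> real \<Rightarrow> real \<Rightarrow> real \<Rightarrow> real" where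
  "px_of a P1 P2 X Y = 2 * a * (X * P1 - Y * P2) / (X - Y)"

definition py_of :: "real \<Rightarrow> real \<Rightarrow> real \<Rightarrow> real \<Rightarrow> real \<Rightarrow> real" where
  "py_of a P1 P2 X Y = 2 * a * sqrt (- X * Y) * (P1 - P2) / (X - Y)"

end

theory Submission
  imports Defs
begin

definition Rp :: "real \<Rightarrow> real \<Rightarrow> real \<Rightarrow> real" where
  "Rp w1 w2 t = 4 * t^3 + (-4 * w1 + 24 * w2) * t^2 + (w1 - 4 * w2) * (w1 - 12 * w2) * t
      + (2 * w1^2 * w2 - 16 * w1 * w2^2 + 32 * w2^3)"

lemma Phi_split:
  assumes "a \<noteq> 0" "t \<noteq> 0"
  shows "Phi a w1 w2 mu t p = 2 * a^2 * p^2 * t + mu * a^2 / (2 * t) + t * Rp w1 w2 t / (16 * a^2)"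
  using assms unfolding Phi_def Rp_def
  by (simp add: field_simps) (simp add: algebra_simps eval_nat_numeral)

lemma m_gen:
  fixes a X Y P1 P2 D :: real
  assumes "D \<noteq> 0" "X = Y + D"
  shows "4 * a * (2 * a * (X * P1 - Y * P2) / D) * (- 2 * X * Y * (P1 - P2) / D)
     + (-2 * (X + Y)) * (4 * a^2 * (- X * Y) * (P1 - P2)^2 / D^2)
     = 8 * a^2 * X * Y * (P2^2 - P1^2) / D"
  using assms(1) unfolding assms(2) by (simp add: field_simps) (simp add: algebra_simps eval_nat_numeral)

lemma Rp_diff: "X * Y * (Rp w1 w2 Y - Rp w1 w2 X) =
   4 * (X - Y) * (X * Y / 1) * (X * Y - 4 * ((2*X+2*Y-w1+4*w2)/4)^2 - 4 * w2 * ((2*X+2*Y-w1+4*w2)/4) - w2 * (4 * w2 - w1))"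
  unfolding Rp_def by (simp add: field_simps) (simp add: algebra_simps power2_eq_square power3_eq_cube)

lemma t3_gen:
  fixes a d Q Z :: real
  assumes "a \<noteq> 0" "d \<noteq> 0"
  shows "4 * d * Q * Z / (4 * a^2 * d) = Q / a^2 * Z"
  using assms by simp

lemma form_gen:
  fixes a s D X Y P1 P2 dX dY :: real
  assumes "a \<noteq> 0" "s \<noteq> 0" "D \<noteq> 0" "X = Y + D"
  shows "2 * a * (X * P1 - Y * P2) / D * ((2 * dX + 2 * dY) / (4 * a)) +
     2 * a * s * (P1 - P2) / D * (inverse s / 2 * (- (dX * Y) - X * dY) / a) = P1 * dX + P2 * dY"
  using assms(1-3) unfolding assms(4) by (simp add: field_simps)

lemma sep_gen:
  fixes X Y H K F G :: real
  assumes d: "X - Y \<noteq> 0" and h: "H = (F - G) / (X - Y)" and k: "K = (4 * X * G - 4 * Y * F) / (X - Y)"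
  shows "F - H * X - K / 4 = 0 \<and> G - H * Y - K / 4 = 0"
proof -
  have h': "H * (X - Y) = F - G" using h d by simp
  have k': "K * (X - Y) = 4 * X * G - 4 * Y * F" using k d by simp
  have e1: "(X - Y) * (F - H * X - K / 4) = 0" using h' k' by algebra
  have e2: "(X - Y) * (G - H * Y - K / 4) = 0" using h' k' by algebra
  show ?thesis using e1 e2 d by simp
qed

lemma K_poly:
  fixes a X Y P1 P2 w1 w2 mu :: real
  assumes a: "a \<noteq> 0" and X0: "X \<noteq> 0" and Y0: "Y \<noteq> 0" and dd: "X - Y \<noteq> 0"
  shows "4 * a * (2 * a * (X * P1 - Y * P2) / (X - Y)) * (- 2 * X * Y * (P1 - P2) / (X - Y)) +
     (4 * w2 - w1 - 4 * a * ((2 * X + 2 * Y - w1 + 4 * w2) / (4 * a))) *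
     (4 * a^2 * (- X * Y) * (P1 - P2)^2 / (X - Y)^2 + mu / (- X * Y / a^2)) +
     a^2 * ((X * Y)^2 / a ^ 4) +
     4 * a^2 * ((2 * X + 2 * Y - w1 + 4 * w2) / (4 * a))^2 * (- X * Y / a^2) +
     4 * a * w2 * ((2 * X + 2 * Y - w1 + 4 * w2) / (4 * a)) * (- X * Y / a^2) +
     w2 * (4 * w2 - w1) * (- X * Y / a^2) =
     (4 * X * Phi a w1 w2 mu Y P2 - 4 * Y * Phi a w1 w2 mu X P1) / (X - Y)"
proof -
  define A where "A = (2 * X + 2 * Y - w1 + 4 * w2) / 4"
  have xa: "(2 * X + 2 * Y - w1 + 4 * w2) / (4 * a) = A / a" using a by (simp add: A_def field_simps)
  have c: "4 * w2 - w1 - 4 * a * (A / a) = -2 * (X + Y)" using a by (simp add: A_def field_simps)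
  have m: "4 * a * (2 * a * (X * P1 - Y * P2) / (X - Y)) * (- 2 * X * Y * (P1 - P2) / (X - Y))
     + (-2 * (X + Y)) * (4 * a^2 * (- X * Y) * (P1 - P2)^2 / (X - Y)^2)
     = 8 * a^2 * X * Y * (P2^2 - P1^2) / (X - Y)"
    using m_gen[of "X - Y" X Y a P1 P2] dd by simp
  have mu: "(-2 * (X + Y)) * (mu / (- X * Y / a^2)) = 2 * (X + Y) * mu * a^2 / (X * Y)"
    using X0 Y0 a by (simp add: field_simps)
  have r: "a^2 * ((X * Y)^2 / a ^ 4) + 4 * a^2 * (A / a)^2 * (- X * Y / a^2) +
     4 * a * w2 * (A / a) * (- X * Y / a^2) + w2 * (4 * w2 - w1) * (- X * Y / a^2)
     = X * Y / a^2 * (X * Y - 4 * A^2 - 4 * w2 * A - w2 * (4 * w2 - w1))"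
    using a by (simp add: field_simps power2_eq_square power4_eq_xxxx)
  have lhs: "4 * a * (2 * a * (X * P1 - Y * P2) / (X - Y)) * (- 2 * X * Y * (P1 - P2) / (X - Y)) +
     (4 * w2 - w1 - 4 * a * ((2 * X + 2 * Y - w1 + 4 * w2) / (4 * a))) *
     (4 * a^2 * (- X * Y) * (P1 - P2)^2 / (X - Y)^2 + mu / (- X * Y / a^2)) +
     a^2 * ((X * Y)^2 / a ^ 4) +
     4 * a^2 * ((2 * X + 2 * Y - w1 + 4 * w2) / (4 * a))^2 * (- X * Y / a^2) +
     4 * a * w2 * ((2 * X + 2 * Y - w1 + 4 * w2) / (4 * a)) * (- X * Y / a^2) +
     w2 * (4 * w2 - w1) * (- X * Y / a^2)
     = 8 * a^2 * X * Y * (P2^2 - P1^2) / (X - Y) + 2 * (X + Y) * mu * a^2 / (X * Y)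
       + X * Y / a^2 * (X * Y - 4 * A^2 - 4 * w2 * A - w2 * (4 * w2 - w1))"
    unfolding xa c using m mu r distrib_left[of "-2 * (X + Y)" "4 * a^2 * (- X * Y) * (P1 - P2)^2 / (X - Y)^2" "mu / (- X * Y / a^2)"]
    by linarith
  have rd: "X * Y * (Rp w1 w2 Y - Rp w1 w2 X) = 4 * (X - Y) * (X * Y) * (X * Y - 4 * A^2 - 4 * w2 * A - w2 * (4 * w2 - w1))"
    using Rp_diff[of X Y w1 w2] by (simp add: A_def)
  have num: "4 * X * Phi a w1 w2 mu Y P2 - 4 * Y * Phi a w1 w2 mu X P1
     = 8 * a^2 * X * Y * (P2^2 - P1^2) + 2 * mu * a^2 * ((X + Y) * (X - Y)) / (X * Y)
       + X * Y * (Rp w1 w2 Y - Rp w1 w2 X) / (4 * a^2)"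
    unfolding Phi_split[OF a X0] Phi_split[OF a Y0] using a X0 Y0
    by (simp add: field_simps)
  have rhs: "(4 * X * Phi a w1 w2 mu Y P2 - 4 * Y * Phi a w1 w2 mu X P1) / (X - Y)
     = 8 * a^2 * X * Y * (P2^2 - P1^2) / (X - Y) + 2 * (X + Y) * mu * a^2 / (X * Y)
       + X * Y * (Rp w1 w2 Y - Rp w1 w2 X) / (4 * a^2 * (X - Y))"
    unfolding num add_divide_distrib using dd by simp
  have t3: "4 * (X - Y) * (X * Y) * (X * Y - 4 * A^2 - 4 * w2 * A - w2 * (4 * w2 - w1)) / (4 * a^2 * (X - Y))
     = X * Y / a^2 * (X * Y - 4 * A^2 - 4 * w2 * A - w2 * (4 * w2 - w1))"
    using a dd by (rule t3_gen)
  show ?thesis unfolding lhs rhs rd t3 by simp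
qed

lemma HK_id:
  fixes a w1 w2 mu P1 P2 X Y y py px x :: real
  assumes a: "a \<noteq> 0" and xy: "X * Y < 0" and d: "X \<noteq> Y"
  and y2: "y^2 = - X * Y / a^2" and py2: "py^2 = 4 * a^2 * (- X * Y) * (P1 - P2)^2 / (X - Y)^2"
  and ypy: "y * py = - 2 * X * Y * (P1 - P2) / (X - Y)"
  and px: "px = 2 * a * (X * P1 - Y * P2) / (X - Y)"
  and x: "x = (2 * X + 2 * Y - w1 + 4 * w2) / (4 * a)"
  shows "H_KdV5 a w1 w2 mu px py x y = (Phi a w1 w2 mu X P1 - Phi a w1 w2 mu Y P2) / (X - Y)"
    and "K_KdV5 a w1 w2 mu px py x y = (4 * X * Phi a w1 w2 mu Y P2 - 4 * Y * Phi a w1 w2 mu X P1) / (X - Y)"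
proof -
  have X0: "X \<noteq> 0" and Y0: "Y \<noteq> 0" using xy by auto
  have dd: "X - Y \<noteq> 0" using d by simp
  have y4: "y^4 = (X*Y)^2 / a^4" using y2
    by (metis (no_types, lifting) power2_eq_square power_mult_distrib mult_minus_left minus_mult_minus numeral_Bit0 power_add power_divide)
  have "H_KdV5 a w1 w2 mu px py x y = (px^2 + py^2) / 2 + (w1 * x^2 + w2 * y^2) / 2 + a * x * y^2 + 2 * a * x^3 + mu / (2 * y^2)"
    by (simp add: H_KdV5_def)
  also have "\<dots> = (Phi a w1 w2 mu X P1 - Phi a w1 w2 mu Y P2) / (X - Y)"
    unfolding y2 py2 px x Phi_def using a X0 Y0 dd
    by (simp add: field_simps) algebra
  finally show "H_KdV5 a w1 w2 mu px py x y = (Phi a w1 w2 mu X P1 - Phi a w1 w2 mu Y P2) / (X - Y)" .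
  have "K_KdV5 a w1 w2 mu px py x y = 4 * a * px * (y * py) + (4 * w2 - w1 - 4 * a * x) * (py^2 + mu / y^2)
     + a^2 * y^4 + 4 * a^2 * x^2 * y^2 + 4 * a * w2 * x * y^2 + w2 * (4 * w2 - w1) * y^2"
    by (simp add: K_KdV5_def algebra_simps)
  also have "\<dots> = (4 * X * Phi a w1 w2 mu Y P2 - 4 * Y * Phi a w1 w2 mu X P1) / (X - Y)"
    unfolding y2 py2 px x ypy y4 using a X0 Y0 dd
    by (rule K_poly)
  finally show "K_KdV5 a w1 w2 mu px py x y = (4 * X * Phi a w1 w2 mu Y P2 - 4 * Y * Phi a w1 w2 mu X P1) / (X - Y)" .
qed

lemma deriv_part:
  fixes a w1 w2 X Y :: real
  assumes a: "a \<noteq> 0" and xy: "X * Y < 0"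
  shows "((\<lambda>(U, V). (x_of a w1 w2 U V, y_of a U V)) has_derivative
     (\<lambda>z. ((2 * fst z + 2 * snd z) / (4 * a),
            (inverse (sqrt (- X * Y)) / 2 * (- (fst z * Y) - X * snd z)) / a))) (at (X, Y))"
proof -
  have e: "(\<lambda>(U, V). (x_of a w1 w2 U V, y_of a U V)) =
     (\<lambda>z. ((2 * fst z + 2 * snd z - w1 + 4 * w2) / (4 * a), sqrt (- fst z * snd z) / a))"
    by (auto simp: x_of_def y_of_def fun_eq_iff)
  have d1: "((\<lambda>z. (2 * fst z + 2 * snd z - w1 + 4 * w2) / (4 * a)) has_derivative (\<lambda>z. (2 * fst z + 2 * snd z) / (4 * a))) (at (X, Y))"
    using a by (auto intro!: derivative_eq_intros simp: fun_eq_iff field_simps)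
  have d2: "((\<lambda>z. sqrt (- fst z * snd z) / a) has_derivative (\<lambda>z. (inverse (sqrt (- X * Y)) / 2 * (- (fst z * Y) - X * snd z)) / a)) (at (X, Y))"
    proof -
    have "0 < - (X * Y)" using xy by linarith
    then have "sqrt (- (X * Y)) > 0" by (rule real_sqrt_gt_zero)
    then have sp: "sqrt (- (X * Y)) \<noteq> 0" by linarith
    have nz: "X \<noteq> 0" "Y \<noteq> 0" using xy by auto
    show ?thesis using xy a sp nz by (auto intro!: derivative_eq_intros simp: fun_eq_iff field_simps)
  qed
  show ?thesis unfolding e using has_derivative_Pair[OF d1 d2] by simp
qed


theorem mainTheorem3:
  fixes a \<omega>\<^sub>1 \<omega>\<^sub>2 \<mu> P1 P2 X Y :: real
  assumes "a \<noteq> 0" and "X * Y < 0" and "X \<noteq> Y"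
  defines "px \<equiv> px_of a P1 P2 X Y" and "py \<equiv> py_of a P1 P2 X Y"
      and "x \<equiv> x_of a \<omega>\<^sub>1 \<omega>\<^sub>2 X Y" and "y \<equiv> y_of a X Y"
  shows "(\<exists>D. ((\<lambda>(U, V). (x_of a \<omega>\<^sub>1 \<omega>\<^sub>2 U V, y_of a U V)) has_derivative D) (at (X, Y))
              \<and> (\<forall>dX dY. px * fst (D (dX, dY)) + py * snd (D (dX, dY)) = P1 * dX + P2 * dY))
    \<and> H_KdV5 a \<omega>\<^sub>1 \<omega>\<^sub>2 \<mu> px py x y
        = (Phi a \<omega>\<^sub>1 \<omega>\<^sub>2 \<mu> X P1 - Phi a \<omega>\<^sub>1 \<omega>\<^sub>2 \<mu> Y P2) / (X - Y)
    \<and> K_KdV5 a \<omega>\<^sub>1 \<omega>\<^sub>2 \<mu> px py x y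
        = (4 * X * Phi a \<omega>\<^sub>1 \<omega>\<^sub>2 \<mu> Y P2 - 4 * Y * Phi a \<omega>\<^sub>1 \<omega>\<^sub>2 \<mu> X P1) / (X - Y)
    \<and> (\<forall>E K. H_KdV5 a \<omega>\<^sub>1 \<omega>\<^sub>2 \<mu> px py x y = E \<and> K_KdV5 a \<omega>\<^sub>1 \<omega>\<^sub>2 \<mu> px py x y = K \<longrightarrow>
         Phi a \<omega>\<^sub>1 \<omega>\<^sub>2 \<mu> X P1 - E * X - K / 4 = 0 \<and> Phi a \<omega>\<^sub>1 \<omega>\<^sub>2 \<mu> Y P2 - E * Y - K / 4 = 0)"
proof -
  have pos: "0 < - (X * Y)" using assms(2) by linarith
  have X0: "X \<noteq> 0" and Y0: "Y \<noteq> 0" using assms(2) by auto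
  have dd: "X - Y \<noteq> 0" using assms(3) by simp
  define s where "s = sqrt (- X * Y)"
  have s2: "s^2 = - X * Y" unfolding s_def using pos by simp
  have ye: "y = s / a" unfolding y_def y_of_def s_def by simp
  have pye: "py = 2 * a * s * (P1 - P2) / (X - Y)" unfolding py_def py_of_def s_def by simp
  have y2: "y^2 = - X * Y / a^2" unfolding ye using s2 by (simp add: power_divide)
  have py2: "py^2 = 4 * a^2 * (- X * Y) * (P1 - P2)^2 / (X - Y)^2"
    unfolding pye using s2 by (simp add: power_divide power_mult_distrib)
  have ypy: "y * py = - 2 * X * Y * (P1 - P2) / (X - Y)"
  proof -
    have "y * py = 2 * s^2 * (P1 - P2) / (X - Y)"
      unfolding ye pye using assms(1) by (simp add: power2_eq_square)
    then show ?thesis unfolding s2 by simp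
  qed
  have pxe: "px = 2 * a * (X * P1 - Y * P2) / (X - Y)" unfolding px_def px_of_def by simp
  have xe: "x = (2 * X + 2 * Y - \<omega>\<^sub>1 + 4 * \<omega>\<^sub>2) / (4 * a)" unfolding x_def x_of_def by simp
  note HK = HK_id[OF assms(1,2,3) y2 py2 ypy pxe xe, of \<mu>]
  have D: "\<exists>D. ((\<lambda>(U, V). (x_of a \<omega>\<^sub>1 \<omega>\<^sub>2 U V, y_of a U V)) has_derivative D) (at (X, Y))
              \<and> (\<forall>dX dY. px * fst (D (dX, dY)) + py * snd (D (dX, dY)) = P1 * dX + P2 * dY)"
  proof (intro exI conjI allI)
    show "((\<lambda>(U, V). (x_of a \<omega>\<^sub>1 \<omega>\<^sub>2 U V, y_of a U V)) has_derivative
     (\<lambda>z. ((2 * fst z + 2 * snd z) / (4 * a),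
            (inverse (sqrt (- X * Y)) / 2 * (- (fst z * Y) - X * snd z)) / a))) (at (X, Y))"
      by (rule deriv_part[OF assms(1,2)])
    fix dX dY
    have sn: "s \<noteq> 0" using s2 pos by auto
    show "px * fst ((\<lambda>z. ((2 * fst z + 2 * snd z) / (4 * a),
            (inverse (sqrt (- X * Y)) / 2 * (- (fst z * Y) - X * snd z)) / a)) (dX, dY)) +
          py * snd ((\<lambda>z. ((2 * fst z + 2 * snd z) / (4 * a),
            (inverse (sqrt (- X * Y)) / 2 * (- (fst z * Y) - X * snd z)) / a)) (dX, dY)) = P1 * dX + P2 * dY"
      unfolding pxe pye fst_conv snd_conv s_def[symmetric]
      by (rule form_gen[OF assms(1) sn dd]) simp
  qed
  have E: "\<forall>E K. H_KdV5 a \<omega>\<^sub>1 \<omega>\<^sub>2 \<mu> px py x y = E \<and> K_KdV5 a \<omega>\<^sub>1 \<omega>\<^sub>2 \<mu> px py x y = K \<longrightarrow>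
         Phi a \<omega>\<^sub>1 \<omega>\<^sub>2 \<mu> X P1 - E * X - K / 4 = 0 \<and> Phi a \<omega>\<^sub>1 \<omega>\<^sub>2 \<mu> Y P2 - E * Y - K / 4 = 0"
    using HK dd sep_gen by blast
  show ?thesis using D HK E by blast
qed

end
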